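(* Let $n$ be a positive odd integer. Then, modulo $(1-aq^n)(a-q^n)$, $$ \sum_{k=0}^{n-1}\frac{(aq;q^2)_k\,(q/a;q^2)_k}{(q^2;q^2)_k^2}\, x^k \equiv (-1)^{(n-1)/2}q^{(1-n^2)/4} \sum_{k=0}^{n-1}\frac{(aq;q^2)_k\,(q/a;q^2)_k}{(q^2;q^2)_k^2}\, q^{2k}\,(x;q^2)_k. $$
   Context: $a,q,x$ are indeterminates. The $q$-shifted factorial is $(y;q)_0=1$ and $(y;q)_m=(1-y)(1-yq)\cdots(1-yq^{m-1})$ for $m\geqslant1$. For rational functions $A,B$ and a polynomial $P$, $A\equiv B\pmod P$ means $A-B=P\cdot C/D$ for polynomials $C,D$ with $D$ coprime to $P$. *)

theory Defs
  imports "HOL-Computational_Algebra.Polynomial" "HOL-Computational_Algebra.Polynomial_Factorial"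
begin

text \<open>Polynomials in three indeterminates a, q, x over the rationals, realised as
  nested univariate polynomials: a is the innermost variable, q the middle one,
  x the outermost one.\<close>

type_synonym mpoly3 = "rat poly poly poly"
type_synonym rfun3 = "mpoly3 fract"

definition var_a :: mpoly3 where "var_a = [:[:[:0, 1:]:]:]"
definition var_q :: mpoly3 where "var_q = [:[:0, 1:]:]"
definition var_x :: mpoly3 where "var_x = [:0, 1:]"

abbreviation A :: rfun3 where "A \<equiv> to_fract var_a"
abbreviation Q :: rfun3 where "Q \<equiv> to_fract var_q"
abbreviation X :: rfun3 where "X \<equiv> to_fract var_x"

definition qpoch :: "'a::comm_ring_1 \<Rightarrow> 'a \<Rightarrow> nat \<Rightarrow> 'a" where
  "qpoch y q m = (\<Prod>j<m. 1 - y * q ^ j)"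

definition rcong :: "rfun3 \<Rightarrow> rfun3 \<Rightarrow> mpoly3 \<Rightarrow> bool" where
  "rcong F G P \<longleftrightarrow> (\<exists>C D. D \<noteq> 0 \<and> coprime D P \<and>
       F - G = to_fract P * to_fract C / to_fract D)"

end

theory Submission
  imports Defs "HOL-Computational_Algebra.Field_as_Ring"
begin



definition sg :: "'a::field \<Rightarrow> nat \<Rightarrow> 'a" where "sg b j = (\<Prod>i<j. - (b^i))"
definition ee :: "'a::field \<Rightarrow> nat \<Rightarrow> nat \<Rightarrow> 'a" where
  "ee b k j = (if j \<le> k then sg b j * qpoch b b k / (qpoch b b j * qpoch b b (k - j)) else 0)"
definition phip :: "'a::field \<Rightarrow> nat \<Rightarrow> 'a poly" where "phip b k = (\<Prod>i<k. [:1, -(b^i):])"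

lemma qpoch_0[simp]: "qpoch y c 0 = 1" by (simp add: qpoch_def)
lemma qpoch_Suc: "qpoch y c (Suc k) = qpoch y c k * (1 - y * c^k)"
  by (simp add: qpoch_def)
lemma sg_0[simp]: "sg b 0 = 1" by (simp add: sg_def)
lemma sg_Suc: "sg b (Suc j) = sg b j * (- (b^j))" by (simp add: sg_def)

lemma alg0: "I \<noteq> 0 \<Longrightarrow> D \<noteq> 0 \<Longrightarrow> A1 \<noteq> 0 \<Longrightarrow> A2 \<noteq> 0 \<Longrightarrow> A1 = 1 - b*u \<Longrightarrow> A2 = 1 - b*v \<Longrightarrow>
       S*(-u)*(K*(1 - b*(u*b*v)))/((I*A1)*(D*A2)) = S*(-u)*K/((I*A1)*D) - u*b*v*(S*K/(I*(D*A2)))"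
  for S K I D u v b A1 A2 :: "'a::field"
proof -
  assume h: "I \<noteq> 0" "D \<noteq> 0" "A1 \<noteq> 0" "A2 \<noteq> 0" and e: "A1 = 1 - b*u" "A2 = 1 - b*v"
  have "S*(-u)*(K*(1 - b*(u*b*v))) = (S*(-u)*K*A2 - u*b*v*S*K*A1)" unfolding e by algebra
  thus ?thesis using h by (simp add: field_simps)
qed
lemma alg_pascal: "I \<noteq> 0 \<Longrightarrow> D \<noteq> 0 \<Longrightarrow> 1 - b*u \<noteq> 0 \<Longrightarrow> 1 - b*v \<noteq> 0 \<Longrightarrow>
       S*(-u)*(K*(1 - b*(u*b*v)))/((I*(1 - b*u))*(D*(1 - b*v))) = S*(-u)*K/((I*(1 - b*u))*D) - u*b*v*(S*K/(I*(D*(1 - b*v))))"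
  for S K I D u v b :: "'a::field"
  by (rule alg0) auto

lemma alg_R1: "J \<noteq> 0 \<Longrightarrow> D \<noteq> 0 \<Longrightarrow> A1 \<noteq> 0 \<Longrightarrow> A2 \<noteq> 0 \<Longrightarrow> A2 = 1 - b*v \<Longrightarrow>
   S*(-u)*K/((J*A1)*D) * A1 = -(u - u*b*v) * (S*K/(J*(D*A2)))"
  for S K J D u v b A1 A2 :: "'a::field"
proof -
  assume h: "J \<noteq> 0" "D \<noteq> 0" "A1 \<noteq> 0" "A2 \<noteq> 0" and e: "A2 = 1 - b*v"
  show ?thesis apply (simp add: field_simps h) unfolding e by algebra
qed

lemma alg_R2: "J \<noteq> 0 \<Longrightarrow> D \<noteq> 0 \<Longrightarrow> A2 \<noteq> 0 \<Longrightarrow> A2 = 1 - b*v \<Longrightarrow>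
   S*(K*(1 - b*(u*v)))/(J*(D*A2)) * (u - b*(u*v)) = u * (1 - b*(u*v)) * (S*K/(J*D))"
  for S K J D u v b A2 :: "'a::field"
proof -
  assume h: "J \<noteq> 0" "D \<noteq> 0" "A2 \<noteq> 0" and e: "A2 = 1 - b*v"
  show ?thesis apply (simp add: field_simps h) unfolding e by algebra
qed

lemma coeff_mult_lin: "coeff (p * [:1, c:]) j = coeff p j + c * (case j of 0 \<Rightarrow> 0 | Suc i \<Rightarrow> coeff p i)"
  for p :: "'a::comm_ring_1 poly" by (cases j) (auto simp: algebra_simps)

lemma phip_Suc: "phip b (Suc k) = phip b k * [:1, -(b^k):]"
  by (simp add: phip_def)

lemma poly_phip: "poly (phip b k) x = qpoch x b k"
  by (simp add: phip_def qpoch_def poly_prod mult.commute)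

lemma alg_trec: "Z \<noteq> 0 \<Longrightarrow> W \<noteq> 0 \<Longrightarrow> (X*P)*(Y*Q)/(Z*W)^2 * W^2 = X*Y/Z^2*(P*Q)"
  for X Y Z W P Q :: "'a::field" by (simp add: field_simps)

lemma alg_step: "al \<noteq> 0 \<Longrightarrow> be \<noteq> 0 \<Longrightarrow> z \<noteq> 0 \<Longrightarrow> b = al*be \<Longrightarrow>
  -(w*E*(b*S*((1-al*z)*(1-be*z))))/(b*z) - (-(S*E*(1-z)*(w-z))/z) = S*E*(z*(1-b*w) - 1 + (al+be-1)*w)"
  for al be z w E S b :: "'a::field"
proof -
  assume h: "al \<noteq> 0" "be \<noteq> 0" "z \<noteq> 0" and e: "b = al*be"
  show ?thesis unfolding e by (simp add: field_simps h)
qed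

lemma alg_pt: "b = al*be \<Longrightarrow>
  S*(-(w-z)*E)*(1-b*w) - S*E*((1-al*w)*(1-be*w)) = S*E*(z*(1-b*w) - 1 + (al+be-1)*w)"
  for al be z w E S b :: "'a::field"
proof -
  assume e: "b = al*be"
  show ?thesis unfolding e by algebra
qed

locale gb =
  fixes b :: "'a::field"
  assumes b0: "b \<noteq> 0" and bi: "\<And>i. 0 < i \<Longrightarrow> b^i \<noteq> 1"
begin

lemma qp_nz: "qpoch b b k \<noteq> 0"
proof -
  have "\<And>j. 1 - b * b^j \<noteq> 0" using bi[of "Suc _"] by auto
  thus ?thesis by (simp add: qpoch_def)
qed

lemma one_minus_nz: "0 < i \<Longrightarrow> 1 - b^i \<noteq> 0" using bi by auto

lemma pascal: "ee b (Suc k) j = ee b k j - b^k * (case j of 0 \<Rightarrow> 0 | Suc i \<Rightarrow> ee b k i)"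
proof (cases j)
  case 0
  have "qpoch b b (Suc k) \<noteq> 0" "qpoch b b k \<noteq> 0" by (rule qp_nz)+
  thus ?thesis using 0 unfolding ee_def by simp
next
  case (Suc i)
  show ?thesis
  proof (cases "i < k")
    case True
    then obtain d where k: "k = Suc (i + d)" using less_imp_Suc_add by blast
    have ar: "Suc k - Suc i = Suc d" "k - Suc i = d" "k - i = Suc d" "Suc i \<le> Suc k" "Suc i \<le> k" "i \<le> k" using k by auto
    have e1: "ee b (Suc k) (Suc i) = sg b i * (-(b^i)) * (qpoch b b k * (1 - b*b^k)) / ((qpoch b b i * (1 - b*b^i)) * (qpoch b b d * (1 - b*b^d)))"
      unfolding ee_def ar if_True qpoch_Suc sg_Suc using ar by simp
    have e2: "ee b k (Suc i) = sg b i * (-(b^i)) * qpoch b b k / ((qpoch b b i * (1 - b*b^i)) * qpoch b b d)"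
      unfolding ee_def ar if_True qpoch_Suc sg_Suc using ar by simp
    have e3: "ee b k i = sg b i * qpoch b b k / (qpoch b b i * (qpoch b b d * (1 - b*b^d)))"
      unfolding ee_def ar if_True qpoch_Suc sg_Suc using ar by simp
    have bk: "b^k = b^i * b * b^d" by (simp add: k power_add)
    have n1: "1 - b*b^i \<noteq> 0" "1 - b*b^d \<noteq> 0" using one_minus_nz[of "Suc i"] one_minus_nz[of "Suc d"] by auto
    show ?thesis unfolding Suc nat.case e1 e2 e3 bk
      by (rule alg_pascal) (use qp_nz n1 in auto)
  next
    case False
    show ?thesis
    proof (cases "i = k")
      case True thus ?thesis using qp_nz by (simp add: ee_def Suc sg_Suc)
    next
      case False
      with \<open>\<not> i < k\<close> show ?thesis by (simp add: ee_def Suc)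
    qed
  qed
qed


lemma coeff_phip: "coeff (phip b k) j = ee b k j"
proof (induction k arbitrary: j)
  case 0 thus ?case by (simp add: phip_def ee_def)
next
  case (Suc k)
  show ?case unfolding phip_Suc coeff_mult_lin pascal
    by (cases j) (simp_all add: Suc)
qed

lemma ee_zero: "k < j \<Longrightarrow> ee b k j = 0" by (simp add: ee_def)
lemma ee_diag: "ee b k k = sg b k" using qp_nz[of k] by (simp add: ee_def)

lemma R1: "ee b k (Suc j) * (1 - b^Suc j) = -(b^j - b^k) * ee b k j"
proof (cases "j < k")
  case True
  then obtain d where k: "k = Suc (j + d)" using less_imp_Suc_add by blast
  have ar: "k - Suc j = d" "k - j = Suc d" "Suc j \<le> k" "j \<le> k" using k by auto
  have e1: "ee b k (Suc j) = sg b j * (-(b^j)) * qpoch b b k / ((qpoch b b j * (1 - b*b^j)) * qpoch b b d)"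
    unfolding ee_def ar if_True qpoch_Suc sg_Suc using ar by simp
  have e2: "ee b k j = sg b j * qpoch b b k / (qpoch b b j * (qpoch b b d * (1 - b*b^d)))"
    unfolding ee_def ar if_True qpoch_Suc sg_Suc using ar by simp
  have bk: "b^k = b^j * b * b^d" by (simp add: k power_add)
  have n1: "1 - b*b^j \<noteq> 0" "1 - b*b^d \<noteq> 0" using one_minus_nz[of "Suc j"] one_minus_nz[of "Suc d"] by auto
  show ?thesis unfolding e1 e2 bk power_Suc
    by (rule alg_R1) (use qp_nz n1 in auto)
next
  case False
  thus ?thesis by (cases "j = k") (simp_all add: ee_def)
qed

lemma R2: "ee b (Suc k) j * (b^j - b^Suc k) = b^j * (1 - b^Suc k) * ee b k j"
proof (cases "j \<le> k")
  case True
  then obtain d where k: "k = j + d" using le_Suc_ex by blast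
  have ar: "Suc k - j = Suc d" "k - j = d" "j \<le> Suc k" using k by auto
  have e1: "ee b (Suc k) j = sg b j * (qpoch b b k * (1 - b*b^k)) / (qpoch b b j * (qpoch b b d * (1 - b*b^d)))"
    unfolding ee_def ar if_True qpoch_Suc using ar by simp
  have e2: "ee b k j = sg b j * qpoch b b k / (qpoch b b j * qpoch b b d)"
    unfolding ee_def ar using True by simp
  have bk: "b^k = b^j * b^d" by (simp add: k power_add)
  have n1: "1 - b*b^d \<noteq> 0" using one_minus_nz[of "Suc d"] by auto
  show ?thesis unfolding e1 e2 power_Suc bk
    by (rule alg_R2) (use qp_nz n1 in auto)
next
  case False
  thus ?thesis by (cases "j = Suc k") (simp_all add: ee_def)
qed

lemma main_gen:
  fixes m :: nat and x lam :: 'a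
  assumes hl: "lam * b^m * sg b m = 1"
  shows "(\<Sum>k<2*m+1. qpoch (b^Suc m) b k * qpoch (inverse (b^m)) b k / (qpoch b b k)^2 * x^k)
       = lam * (\<Sum>k<2*m+1. qpoch (b^Suc m) b k * qpoch (inverse (b^m)) b k / (qpoch b b k)^2 * b^k * qpoch x b k)"
proof -
  define n where "n = 2*m+1"
  define al where "al = b^Suc m"
  define be where "be = inverse (b^m)"
  define t where "t k = qpoch al b k * qpoch be b k / (qpoch b b k)^2" for k
  have bm: "b^m \<noteq> 0" using b0 by simp
  have albe: "b = al*be" using bm by (simp add: al_def be_def)
  have al0: "al \<noteq> 0" "be \<noteq> 0" using b0 by (auto simp: al_def be_def)
  have mn: "m < n" by (simp add: n_def)
  have t0: "t k = 0" if "m < k" for k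
  proof -
    have "qpoch be b k = 0" unfolding qpoch_def using that bm
      by (auto simp: be_def intro!: bexI[of _ m])
    thus ?thesis by (simp add: t_def)
  qed
  have trec: "t (Suc j) * (1 - b^Suc j)^2 = t j * ((1 - al*b^j)*(1 - be*b^j))" for j
    unfolding t_def qpoch_Suc power_Suc[of b j] by (rule alg_trec) (use qp_nz one_minus_nz[of "Suc j"] in auto)
  define s where "s k = t k * b^k" for k
  have srec: "s (Suc k) * (1 - b^Suc k)^2 = b * s k * ((1 - al*b^k)*(1 - be*b^k))" for k
  proof -
    have "s (Suc k) * (1 - b^Suc k)^2 = b^(Suc k) * (t (Suc k) * (1 - b^Suc k)^2)"
      by (simp add: s_def algebra_simps)
    also have "\<dots> = b^(Suc k) * (t k * ((1 - al*b^k)*(1 - be*b^k)))" unfolding trec ..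
    finally show ?thesis by (simp add: s_def algebra_simps)
  qed
  define gj where "gj j = (\<Sum>k<n. s k * ee b k j)" for j
  have grec: "gj (Suc j) * (1 - b^Suc j)^2 = gj j * ((1 - al*b^j)*(1 - be*b^j))" for j
  proof -
    define w where "w = b^j"
    define G where "G k = -(s k * ee b k j * (1 - b^k) * (w - b^k)) / b^k" for k
    define P where "P k = b^k*(1 - b*w) - 1 + (al + be - 1)*w" for k
    have step: "G (Suc k) - G k = s k * ee b k j * P k" for k
    proof -
      have "s (Suc k) * ee b (Suc k) j * (1 - b^Suc k) * (w - b^Suc k)
          = s (Suc k) * (1 - b^Suc k) * (ee b (Suc k) j * (b^j - b^Suc k))"
        unfolding w_def by (simp only: ac_simps)
      also have "\<dots> = s (Suc k) * (1 - b^Suc k) * (b^j * (1 - b^Suc k) * ee b k j)" unfolding R2 ..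
      also have "\<dots> = w * ee b k j * (s (Suc k) * (1 - b^Suc k)^2)"
        unfolding w_def by (simp only: power2_eq_square ac_simps)
      also have "\<dots> = w * ee b k j * (b * s k * ((1 - al*b^k)*(1 - be*b^k)))" unfolding srec ..
      finally have gs: "G (Suc k) = -(w * ee b k j * (b * s k * ((1 - al*b^k)*(1 - be*b^k)))) / (b * b^k)"
        unfolding G_def by simp
      show ?thesis unfolding gs unfolding G_def P_def
        by (rule alg_step) (use al0 b0 albe in auto)
    qed
    have G0: "G 0 = 0" by (simp add: G_def)
    have Gn: "G n = 0" using t0[OF mn] by (simp add: G_def s_def)
    have sum0: "(\<Sum>k<n. s k * ee b k j * P k) = 0"
      using sum_lessThan_telescope[of G n] step G0 Gn by simp
    have "gj (Suc j) * (1 - b^Suc j)^2 - gj j * ((1 - al*b^j)*(1 - be*b^j))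
        = (\<Sum>k<n. s k * (ee b k (Suc j) * (1 - b^Suc j)) * (1 - b^Suc j) - s k * ee b k j * ((1 - al*b^j)*(1 - be*b^j)))"
      unfolding gj_def sum_subtractf sum_distrib_right by (simp add: algebra_simps power2_eq_square)
    also have "\<dots> = (\<Sum>k<n. s k * ee b k j * P k)"
      unfolding R1 unfolding power_Suc[of b j] P_def w_def[symmetric] by (rule sum.cong[OF refl], rule alg_pt[OF albe])
    finally show ?thesis using sum0 by simp
  qed
  have coef: "(if j < n then t j else 0) = lam * gj j" for j
  proof (cases "m < j")
    case True
    have "gj j = 0" unfolding gj_def
    proof (rule sum.neutral, intro ballI)
      fix k assume "k \<in> {..<n}"
      show "s k * ee b k j = 0"
      proof (cases "k < j")
        case True thus ?thesis by (simp add: ee_zero)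
      next
        case False thus ?thesis using \<open>m < j\<close> t0[of k] by (simp add: s_def)
      qed
    qed
    thus ?thesis using t0[OF True] by simp
  next
    case False
    have gm: "gj m = s m * sg b m"
    proof -
      have "gj m = (\<Sum>k<n. if k = m then s m * sg b m else 0)" unfolding gj_def
      proof (rule sum.cong)
        fix k assume "k \<in> {..<n}"
        show "s k * ee b k m = (if k = m then s m * sg b m else 0)"
        proof (cases "k < m")
          case True thus ?thesis by (simp add: ee_zero)
        next
          case False thus ?thesis using t0[of k] by (cases "k = m") (auto simp: s_def ee_diag)
        qed
      qed simp
      thus ?thesis using mn by simp
    qed
    have down: "t (m - d) = lam * gj (m - d)" if "d \<le> m" for d
      using that
    proof (induction d)
      case 0
      show ?case using hl by (simp add: gm s_def algebra_simps)
    next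
      case (Suc d)
      define j where "j = m - Suc d"
      have sj: "Suc j = m - d" "j < m" using Suc.prems by (auto simp: j_def)
      have IH: "t (Suc j) = lam * gj (Suc j)" using Suc by (simp add: sj)
      have R0: "(1 - al*b^j)*(1 - be*b^j) \<noteq> 0"
      proof -
        have "al*b^j = b^(Suc m + j)" by (simp add: al_def power_add)
        hence a1: "1 - al*b^j \<noteq> 0" using one_minus_nz[of "Suc m + j"] by simp
        have bmj: "b^m = b^j * b^(m - j)" using sj by (simp flip: power_add)
        have "b^(m-j) \<noteq> 1" using bi[of "m - j"] sj by simp
        hence "be*b^j \<noteq> 1" using b0 unfolding be_def bmj by (simp add: field_simps)
        hence a2: "1 - be*b^j \<noteq> 0" by simp
        show ?thesis using a1 a2 by simp
      qed
      have "t j * ((1 - al*b^j)*(1 - be*b^j)) = lam * gj j * ((1 - al*b^j)*(1 - be*b^j))"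
        using trec[of j] grec[of j] IH by (metis mult.assoc)
      hence "t j = lam * gj j" using R0 by simp
      thus ?case by (simp add: j_def)
    qed
    have "t j = lam * gj j" using down[of "m - j"] False by simp
    thus ?thesis using False mn by simp
  qed
  define fp where "fp = (\<Sum>k<n. monom (t k) k)"
  define gp where "gp = (\<Sum>k<n. smult (s k) (phip b k))"
  have "fp = smult lam gp"
  proof (rule poly_eqI)
    fix j
    have "coeff fp j = (if j < n then t j else 0)"
      unfolding fp_def coeff_sum coeff_monom by (simp add: sum.delta)
    moreover have "coeff (smult lam gp) j = lam * gj j"
      unfolding gp_def gj_def coeff_smult coeff_sum coeff_phip by simp
    ultimately show "coeff fp j = coeff (smult lam gp) j" using coef by metis
  qed
  hence "poly fp x = lam * poly gp x" by simp
  moreover have "poly fp x = (\<Sum>k<n. t k * x^k)" unfolding fp_def poly_sum poly_monom ..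
  moreover have "poly gp x = (\<Sum>k<n. s k * qpoch x b k)" unfolding gp_def poly_sum poly_smult poly_phip ..
  ultimately show ?thesis unfolding n_def t_def s_def al_def be_def by simp
qed

end



lemma to_fract_power: "to_fract (x ^ k) = to_fract x ^ k"
  by (induction k) simp_all

lemma to_fract_prod: "to_fract (\<Prod>i\<in>S. f i) = (\<Prod>i\<in>S. to_fract (f i))"
  by (cases "finite S", induction S rule: finite_induct) simp_all

lemma sg_pow: "sg (q^2) m * (q^2)^m = (-1)^m * q^(m*(m+1))" for q :: "'a::field"
proof (induction m)
  case 0 thus ?case by simp
next
  case (Suc m)
  have "sg (q^2) (Suc m) * (q^2)^Suc m = (sg (q^2) m * (q^2)^m) * (-((q^2)^m) * q^2)"
    by (simp add: sg_Suc algebra_simps)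
  also have "\<dots> = (-1)^Suc m * (q^(m*(m+1)) * q^(2*m) * q^2)" unfolding Suc
    by (simp add: power_mult)
  also have "\<dots> = (-1)^Suc m * q^(m*(m+1) + 2*m + 2)" by (simp only: power_add)
  also have "m*(m+1) + 2*m + 2 = Suc m * (Suc m + 1)" by (simp add: algebra_simps)
  finally show ?case .
qed

lemma varq_pow_ne1: "0 < i \<Longrightarrow> var_q ^ i \<noteq> 1"
proof
  assume "0 < i" "var_q ^ i = 1"
  have cp: "[:c:]^k = [:c^k:]" for c :: "rat poly poly" and k by (induction k) (simp_all add: one_pCons)
  have "var_q ^ i = [:[:0,1:]^i:]" by (simp add: var_q_def cp)
  hence "[:0,1:]^i = (1 :: rat poly poly)" using \<open>var_q ^ i = 1\<close> by (simp add: one_pCons)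
  hence "degree ([:0,1:]^i :: rat poly poly) = 0" by simp
  moreover have "degree ([:0,1:]^i :: rat poly poly) = i" by (simp add: degree_power_eq)
  ultimately show False using \<open>0 < i\<close> by simp
qed

lemma Q_nz: "Q \<noteq> 0" by (simp add: var_q_def)
lemma A_nz: "A \<noteq> 0" by (simp add: var_a_def)

lemma Q_pow_ne1: "0 < i \<Longrightarrow> Q ^ i \<noteq> 1"
  using varq_pow_ne1[of i] by (metis to_fract_1 to_fract_eq_iff to_fract_power)

lemma gbQ: "gb (Q^2)"
  by unfold_locales (use Q_nz Q_pow_ne1 in \<open>auto simp flip: power_mult\<close>)

lemma mainid:
  assumes n: "n = 2*m+1"
  shows "(\<Sum>k<n. qpoch (Q^n*Q) (Q^2) k * qpoch (Q/Q^n) (Q^2) k / (qpoch (Q^2) (Q^2) k)^2 * X^k)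
    = (-1)^m * inverse (Q^(m*(m+1))) * (\<Sum>k<n. qpoch (Q^n*Q) (Q^2) k * qpoch (Q/Q^n) (Q^2) k / (qpoch (Q^2) (Q^2) k)^2 * Q^(2*k) * qpoch X (Q^2) k)"
proof -
  interpret gb "Q^2" by (rule gbQ)
  have qn: "Q^n = Q^(2*m)*Q" by (simp add: n power_add)
  have e1: "(Q^2)^Suc m = Q^n*Q" unfolding qn power_mult by (simp add: power2_eq_square)
  have e2: "inverse ((Q^2)^m) = Q/Q^n" unfolding qn using Q_nz by (simp add: power_mult divide_inverse)
  have e3: "(Q^2)^k = Q^(2*k)" for k by (simp add: power_mult)
  have sp: "(Q^2)^m * sg (Q^2) m = (-1)^m * Q^(m*(m+1))" using sg_pow[of Q m] by (simp add: mult.commute)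
  have mm: "(-1)^m * (-1)^m = (1::rfun3)" by (simp flip: power_add add: mult_2[symmetric] power_mult)
  have hl: "(-1)^m * inverse (Q^(m*(m+1))) * (Q^2)^m * sg (Q^2) m = 1"
    unfolding mult.assoc[of _ "(Q^2)^m"] sp using Q_nz mm
    by (metis (no_types, lifting) inverse_nonzero_iff_nonzero mult.assoc mult.left_commute power_not_zero right_inverse mult_1_right)
  show ?thesis using main_gen[OF hl, of X] unfolding e1 e2 unfolding e3 by (simp only: n[symmetric])
qed




definition inL :: "mpoly3 \<Rightarrow> rfun3 \<Rightarrow> bool" where
  "inL D z \<longleftrightarrow> (\<exists>r k. z * to_fract D ^ k = to_fract r)"

lemma inL_fract: "inL D (to_fract r)"
  unfolding inL_def by (rule exI[of _ r], rule exI[of _ 0]) simp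

lemma inL_0: "inL D 0" using inL_fract[of D 0] by simp
lemma inL_1: "inL D 1" using inL_fract[of D 1] by simp

lemma inL_add: "inL D x \<Longrightarrow> inL D y \<Longrightarrow> inL D (x + y)"
proof -
  assume "inL D x" "inL D y"
  then obtain r1 k1 r2 k2 where h: "x * to_fract D ^ k1 = to_fract r1" "y * to_fract D ^ k2 = to_fract r2"
    unfolding inL_def by blast
  have "(x + y) * to_fract D ^ (k1 + k2) = (x * to_fract D ^ k1) * to_fract D ^ k2 + (y * to_fract D ^ k2) * to_fract D ^ k1"
    by (simp add: power_add algebra_simps)
  also have "\<dots> = to_fract (r1 * D ^ k2 + r2 * D ^ k1)" unfolding h by (simp add: to_fract_power)
  finally show ?thesis unfolding inL_def by blast
qed

lemma inL_mult: "inL D x \<Longrightarrow> inL D y \<Longrightarrow> inL D (x * y)"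
proof -
  assume "inL D x" "inL D y"
  then obtain r1 k1 r2 k2 where h: "x * to_fract D ^ k1 = to_fract r1" "y * to_fract D ^ k2 = to_fract r2"
    unfolding inL_def by blast
  have "(x * y) * to_fract D ^ (k1 + k2) = (x * to_fract D ^ k1) * (y * to_fract D ^ k2)"
    by (simp add: power_add algebra_simps)
  also have "\<dots> = to_fract (r1 * r2)" unfolding h by simp
  finally show ?thesis unfolding inL_def by blast
qed

lemma inL_uminus: "inL D x \<Longrightarrow> inL D (- x)"
proof -
  assume "inL D x"
  then obtain r k where h: "x * to_fract D ^ k = to_fract r" unfolding inL_def by blast
  have "(-x) * to_fract D ^ k = to_fract (-r)" using h by simp
  thus ?thesis unfolding inL_def by blast
qed

lemma inL_diff: "inL D x \<Longrightarrow> inL D y \<Longrightarrow> inL D (x - y)"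
  using inL_add[of D x "-y"] inL_uminus[of D y] by simp

lemma inL_power: "inL D x \<Longrightarrow> inL D (x ^ k)"
  by (induction k) (simp_all add: inL_1 inL_mult)

lemma inL_sum: "(\<And>i. i \<in> S \<Longrightarrow> inL D (f i)) \<Longrightarrow> inL D (\<Sum>i\<in>S. f i)"
  by (induction S rule: infinite_finite_induct) (auto simp: inL_0 inL_add)

lemma inL_prod: "(\<And>i. i \<in> S \<Longrightarrow> inL D (f i)) \<Longrightarrow> inL D (\<Prod>i\<in>S. f i)"
  by (induction S rule: infinite_finite_induct) (auto simp: inL_1 inL_mult)

lemma inL_inv: "D \<noteq> 0 \<Longrightarrow> u dvd D \<Longrightarrow> inL D (inverse (to_fract u))"
proof -
  assume "D \<noteq> 0" "u dvd D"
  then obtain w where w: "D = u * w" by blast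
  with \<open>D \<noteq> 0\<close> have "u \<noteq> 0" by auto
  have "inverse (to_fract u) * to_fract D ^ 1 = to_fract w" using \<open>u \<noteq> 0\<close> by (simp add: w)
  thus ?thesis unfolding inL_def by blast
qed

definition Lpoly :: "mpoly3 \<Rightarrow> rfun3 poly \<Rightarrow> bool" where
  "Lpoly D p \<longleftrightarrow> (\<forall>i. inL D (coeff p i))"

lemma inL_poly: "Lpoly D p \<Longrightarrow> inL D z \<Longrightarrow> inL D (poly p z)"
  unfolding poly_altdef Lpoly_def by (intro inL_sum inL_mult inL_power) auto

lemma Lpoly_pCons: "inL D a \<Longrightarrow> Lpoly D p \<Longrightarrow> Lpoly D (pCons a p)"
  unfolding Lpoly_def by (auto simp: coeff_pCons split: nat.split)

lemma Lpoly_0: "Lpoly D 0" unfolding Lpoly_def by (simp add: inL_0)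

lemma Lpoly_mult: "Lpoly D p \<Longrightarrow> Lpoly D q \<Longrightarrow> Lpoly D (p * q)"
  unfolding Lpoly_def coeff_mult by (auto intro!: inL_sum inL_mult)

lemma Lpoly_1: "Lpoly D 1" unfolding one_pCons by (intro Lpoly_pCons Lpoly_0 inL_1)

lemma Lpoly_prod: "(\<And>i. i \<in> S \<Longrightarrow> Lpoly D (f i)) \<Longrightarrow> Lpoly D (\<Prod>i\<in>S. f i)"
  by (induction S rule: infinite_finite_induct) (auto simp: Lpoly_1 Lpoly_mult)

lemma Lpoly_sum: "(\<And>i. i \<in> S \<Longrightarrow> Lpoly D (f i)) \<Longrightarrow> Lpoly D (\<Sum>i\<in>S. f i)"
  unfolding Lpoly_def coeff_sum by (auto intro!: inL_sum)

lemma Lpoly_smult: "inL D c \<Longrightarrow> Lpoly D p \<Longrightarrow> Lpoly D (smult c p)"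
  unfolding Lpoly_def by (auto intro!: inL_mult)

lemma Lpoly_synth: "Lpoly D p \<Longrightarrow> inL D c \<Longrightarrow> Lpoly D (synthetic_div p c)"
proof (induction p rule: pCons_induct)
  case 0 thus ?case by (simp add: Lpoly_0)
next
  case (pCons a p)
  have "Lpoly D p" using pCons.prems(1) unfolding Lpoly_def
    by (metis coeff_pCons_Suc)
  thus ?case using pCons by (auto intro!: Lpoly_pCons inL_poly)
qed




lemma const_dvd: "c dvd [:s:] \<Longrightarrow> s \<noteq> 0 \<Longrightarrow> c = [:coeff c 0:] \<and> coeff c 0 dvd s"
  for c :: "'a::idom poly"
proof -
  assume "c dvd [:s:]" "s \<noteq> 0"
  then obtain e where e: "[:s:] = c * e" by blast
  with \<open>s \<noteq> 0\<close> have "c \<noteq> 0" "e \<noteq> 0" by auto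
  have "degree (c * e) = 0" unfolding e[symmetric] by simp
  hence "degree c = 0" "degree e = 0" using degree_mult_eq[OF \<open>c \<noteq> 0\<close> \<open>e \<noteq> 0\<close>] by auto
  then obtain c0 e0 where c: "c = [:c0:]" and ee: "e = [:e0:]" by (metis degree_eq_zeroE)
  have "s = c0 * e0" using e unfolding c ee by simp
  thus ?thesis unfolding c by simp
qed

lemma const3_dvd: "c dvd [:[:t:]:] \<Longrightarrow> t \<noteq> 0 \<Longrightarrow> \<exists>c0. c = [:[:c0:]:]"
  for c :: "'a::idom poly poly"
proof -
  assume h: "c dvd [:[:t:]:]" "t \<noteq> 0"
  from const_dvd[OF h(1)] h(2) have c: "c = [:coeff c 0:]" and d: "coeff c 0 dvd [:t:]" by auto
  from const_dvd[OF d h(2)] have "coeff c 0 = [:coeff (coeff c 0) 0:]" by auto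
  with c show ?thesis by metis
qed

lemma const3_coeff: "[:[:c0:]:] dvd p \<Longrightarrow> c0 dvd coeff (coeff p i) j"
  for p :: "'a::comm_ring_1 poly poly"
proof -
  assume "[:[:c0:]:] dvd p"
  then obtain e where "p = [:[:c0:]:] * e" by blast
  hence "coeff (coeff p i) j = c0 * coeff (coeff e i) j" by simp
  thus ?thesis by simp
qed

lemma unit_crit: "c dvd [:[:t:]:] \<Longrightarrow> t \<noteq> 0 \<Longrightarrow> c dvd p \<Longrightarrow> is_unit (coeff (coeff p i) j) \<Longrightarrow> is_unit c"
  for c :: mpoly3
proof -
  assume h: "c dvd [:[:t:]:]" "t \<noteq> 0" "c dvd p" "is_unit (coeff (coeff p i) j)"
  then obtain c0 where c: "c = [:[:c0:]:]" using const3_dvd by blast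
  have "c0 dvd coeff (coeff p i) j" using const3_coeff h(3) c by blast
  hence "is_unit c0" using h(4) dvd_unit_imp_unit by blast
  then obtain d where "1 = c0 * d" by auto
  hence "c * [:[:d:]:] = 1" by (simp add: c pCons_one)
  thus ?thesis by (metis dvd_triv_left)
qed

lemma cp3: "[:c:]^k = [:c^k:]" for c :: "'a::comm_semiring_1" by (induction k) (simp_all add: pCons_one power_commutes)

lemma varq_pow: "var_q ^ k = [:monom 1 k:]"
  by (simp add: var_q_def cp3 monom_altdef)

lemma vara_pow: "var_a ^ k = [:[:[:0,1:]^k:]:]"
  by (simp add: var_a_def cp3)

lemma xk_nz: "0 < k \<Longrightarrow> ([:0,1:]::rat poly)^k - 1 \<noteq> 0"
proof
  assume "0 < k" "([:0,1:]::rat poly)^k - 1 = 0"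
  hence "([:0,1:]::rat poly)^k = 1" by simp
  hence "degree (([:0,1:]::rat poly)^k) = 0" by simp
  moreover have "degree (([:0,1:]::rat poly)^k) = k" by (simp add: degree_power_eq)
  ultimately show False using \<open>0 < k\<close> by simp
qed

lemma coeff_P1: "0 < n \<Longrightarrow> coeff (coeff (1 - var_a * var_q ^ n) 0) 0 = 1"
  unfolding varq_pow var_a_def by simp

lemma coeff_P2: "0 < n \<Longrightarrow> coeff (coeff (var_a - var_q ^ n) 0) n = -1"
  unfolding varq_pow var_a_def by (cases n) simp_all

lemma coeff_q: "coeff (coeff var_q 0) 1 = 1" by (simp add: var_q_def)
lemma coeff_qn: "coeff (coeff (var_q^n) 0) n = 1" unfolding varq_pow by simp

lemma one3: "(1::mpoly3) = [:[:1:]:]" by (simp add: pCons_one)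

lemma aN1: "var_a^N - 1 = [:[:[:0,1:]^N - 1:]:]"
  unfolding vara_pow by (subst one3) simp

lemma a_const: "var_a = [:[:[:0,1:]:]:]" by (simp add: var_a_def)
lemma x_nz: "([:0,1:]::rat poly) \<noteq> 0" by simp

lemma cop_a1: "coprime var_a (1 - var_a * var_q ^ n)"
proof (rule coprimeI)
  fix c assume h: "c dvd var_a" "c dvd 1 - var_a * var_q ^ n"
  have "c dvd (1 - var_a * var_q ^ n) + var_a * var_q^n" by (rule dvd_add[OF h(2) dvd_mult2[OF h(1)]])
  thus "is_unit c" by simp
qed

lemma cop_a2: "coprime var_a (var_a - var_q ^ n)"
proof (rule coprimeI)
  fix c assume h: "c dvd var_a" "c dvd var_a - var_q ^ n"
  have "c dvd var_a - (var_a - var_q ^ n)" by (rule dvd_diff[OF h])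
  hence hq: "c dvd var_q^n" by simp
  have h1: "c dvd [:[:[:0,1:]:]:]" using h(1) unfolding a_const .
  from unit_crit[OF h1 x_nz hq, of 0 n] show "is_unit c" by (simp add: coeff_qn)
qed

lemma qn_split: "0 < n \<Longrightarrow> var_q ^ n = var_q * var_q^(n - 1)"
  by (cases n) simp_all

lemma cop_q1: assumes n: "0 < n" shows "coprime var_q (1 - var_a * var_q ^ n)"
proof (rule coprimeI)
  fix c assume h: "c dvd var_q" "c dvd 1 - var_a * var_q ^ n"
  have d: "c dvd (1 - var_a * var_q ^ n) + var_q * (var_a * var_q^(n-1))" by (rule dvd_add[OF h(2) dvd_mult2[OF h(1)]])
  have e: "(1 - var_a * var_q ^ n) + var_q * (var_a * var_q^(n-1)) = 1"
    unfolding qn_split[OF n] by (simp only: algebra_simps diff_add_cancel)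
  show "is_unit c" using d by (simp only: e)
qed

lemma cop_q2: assumes n: "0 < n" shows "coprime var_q (var_a - var_q ^ n)"
proof (rule coprimeI)
  fix c assume h: "c dvd var_q" "c dvd var_a - var_q ^ n"
  have d: "c dvd (var_a - var_q ^ n) + var_q * var_q^(n-1)" by (rule dvd_add[OF h(2) dvd_mult2[OF h(1)]])
  have e: "(var_a - var_q ^ n) + var_q * var_q^(n-1) = var_a"
    unfolding qn_split[OF n] by (rule diff_add_cancel)
  have "c dvd var_a" using d by (simp only: e)
  hence h1: "c dvd [:[:[:0,1:]:]:]" unfolding a_const .
  show "is_unit c" by (rule unit_crit[OF h1 x_nz h(1), of 0 1]) (unfold coeff_q, simp)
qed

lemma cop_f1: assumes n: "0 < n" "0 < N" shows "coprime (1 - var_q^N) (1 - var_a * var_q ^ n)"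
proof (rule coprimeI)
  fix c assume h: "c dvd 1 - var_q^N" "c dvd 1 - var_a * var_q ^ n"
  have i1: "1 - (var_q^N)^n = (1 - var_q^N) * (\<Sum>i<n. (var_q^N)^i)"
    by (rule one_diff_power_eq)
  have i2: "1 - (var_a * var_q^n)^N = (1 - var_a * var_q ^ n) * (\<Sum>i<N. (var_a * var_q^n)^i)"
    by (rule one_diff_power_eq)
  have pw: "(var_a * var_q^n)^N = var_a^N * (var_q^N)^n"
    by (simp only: power_mult_distrib power_mult[symmetric] mult.commute[of n N])
  have d1: "c dvd var_a^N * (1 - (var_q^N)^n)" unfolding i1 by (rule dvd_mult, rule dvd_mult2, rule h(1))
  have d2: "c dvd 1 - (var_a * var_q^n)^N" unfolding i2 by (rule dvd_mult2, rule h(2))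
  have "c dvd var_a^N * (1 - (var_q^N)^n) - (1 - (var_a * var_q^n)^N)" by (rule dvd_diff[OF d1 d2])
  moreover have "var_a^N * (1 - (var_q^N)^n) - (1 - (var_a * var_q^n)^N) = var_a^N - 1"
    unfolding pw by (simp add: algebra_simps)
  ultimately have "c dvd var_a^N - 1" by metis
  hence h1: "c dvd [:[:[:0,1:]^N - 1:]:]" unfolding aN1 .
  show "is_unit c" by (rule unit_crit[OF h1 xk_nz[OF n(2)] h(2), of 0 0]) (unfold coeff_P1[OF n(1)], simp)
qed

lemma cop_f2: assumes n: "0 < n" "0 < N" shows "coprime (1 - var_q^N) (var_a - var_q ^ n)"
proof (rule coprimeI)
  fix c assume h: "c dvd 1 - var_q^N" "c dvd var_a - var_q ^ n"
  have i1: "1 - (var_q^N)^n = (1 - var_q^N) * (\<Sum>i<n. (var_q^N)^i)"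
    by (rule one_diff_power_eq)
  have i2: "var_a^N - (var_q^n)^N = (var_a - var_q ^ n) * (\<Sum>i<N. (var_q^n)^(N - Suc i) * var_a^i)"
    by (rule power_diff_sumr2)
  have pw: "(var_q^n)^N = (var_q^N)^n"
    by (simp only: power_mult[symmetric] mult.commute[of n N])
  have d1: "c dvd (1 - (var_q^N)^n)" unfolding i1 by (rule dvd_mult2, rule h(1))
  have d2: "c dvd var_a^N - (var_q^n)^N" unfolding i2 by (rule dvd_mult2, rule h(2))
  have "c dvd (1 - (var_q^N)^n) + (var_a^N - (var_q^n)^N)" by (rule dvd_add[OF d1 d2])
  moreover have "(1 - (var_q^N)^n) + (var_a^N - (var_q^n)^N) = var_a^N - 1 + 2 * (1 - (var_q^N)^n)"
    unfolding pw by (simp add: algebra_simps)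
  ultimately have "c dvd var_a^N - 1 + 2 * (1 - (var_q^N)^n)" by metis
  hence "c dvd (var_a^N - 1 + 2 * (1 - (var_q^N)^n)) - 2 * (1 - (var_q^N)^n)"
    by (rule dvd_diff, intro dvd_mult d1)
  hence "c dvd var_a^N - 1" by simp
  hence h1: "c dvd [:[:[:0,1:]^N - 1:]:]" unfolding aN1 .
  show "is_unit c" by (rule unit_crit[OF h1 xk_nz[OF n(2)] h(2), of 0 n]) (unfold coeff_P2[OF n(1)], simp)
qed




definition fq :: "nat \<Rightarrow> mpoly3" where "fq j = 1 - var_q^(2*Suc j)"
definition D0 :: "nat \<Rightarrow> mpoly3" where "D0 n = var_a * var_q * (\<Prod>j<n. fq j)"

lemma fq_nz: "fq j \<noteq> 0" using varq_pow_ne1[of "2*Suc j"] by (simp add: fq_def)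
lemma D0_nz: "D0 n \<noteq> 0" using fq_nz by (simp add: D0_def var_a_def var_q_def)

lemma cop: assumes n: "0 < n" shows "coprime (D0 n) ((1 - var_a*var_q^n)*(var_a - var_q^n))"
proof -
  have p1: "coprime (\<Prod>j<n. fq j) (1 - var_a*var_q^n)"
    by (rule prod_coprime_left) (unfold fq_def, rule cop_f1[OF n], simp)
  have p2: "coprime (\<Prod>j<n. fq j) (var_a - var_q^n)"
    by (rule prod_coprime_left) (unfold fq_def, rule cop_f2[OF n], simp)
  show ?thesis unfolding D0_def coprime_mult_left_iff coprime_mult_right_iff
    using p1 p2 cop_a1[of n] cop_a2[of n] cop_q1[OF n] cop_q2[OF n] by blast
qed

definition Pip :: "nat \<Rightarrow> rfun3 poly" where
  "Pip k = (\<Prod>j<k. [:1 + (Q*(Q^2)^j)^2, -(Q*(Q^2)^j):])"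

lemma factor_id: "a \<noteq> 0 \<Longrightarrow> (1 - a*q*c)*(1 - q/a*c) = poly [:1 + (q*c)^2, -(q*c):] (a + inverse a)"
  for a q c :: "'a::field"
  by (simp add: field_simps power2_eq_square)

lemma pi_poly: "a \<noteq> 0 \<Longrightarrow> qpoch (a*Q) (Q^2) k * qpoch (Q/a) (Q^2) k = poly (Pip k) (a + inverse a)"
  unfolding qpoch_def Pip_def poly_prod prod.distrib[symmetric]
  by (rule prod.cong[OF refl], rule factor_id) assumption

lemma yy: "a \<noteq> 0 \<Longrightarrow> c \<noteq> 0 \<Longrightarrow> a + inverse a - (c + inverse c) = -((1 - a*c)*(a - c))*(inverse a * inverse c)"
  for a c :: "'a::field"
  by (simp add: field_simps)

lemma alg_d: "inverse c ^ 2 * (x - l * (w * r)) * p = p / c^2 * x - l * (p / c^2 * w * r)"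
  for c x l w r p :: "'a::field"
  by (simp add: divide_inverse power_inverse algebra_simps)

lemma tfq: "to_fract (fq j) = 1 - Q^2 * (Q^2)^j"
  unfolding fq_def by (simp add: to_fract_power power_mult power2_eq_square)

lemma synth_eval: "poly p y = (y - c) * poly (synthetic_div p c) y + poly p c" for p :: "'a::field poly"
proof -
  have "poly p y = poly ([:-c, 1:] * synthetic_div p c + [:poly p c:]) y"
    using synthetic_div_correct'[of c p] by simp
  thus ?thesis by (simp add: algebra_simps)
qed

theorem theorem4p2:
  fixes n :: nat
  assumes "odd n"
  shows "rcong
    (\<Sum>k<n. qpoch (A * Q) (Q^2) k * qpoch (Q / A) (Q^2) k / (qpoch (Q^2) (Q^2) k)^2 * X ^ k)
    ((-1) ^ ((n - 1) div 2) * Q powi ((1 - int n ^ 2) div 4) *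
     (\<Sum>k<n. qpoch (A * Q) (Q^2) k * qpoch (Q / A) (Q^2) k / (qpoch (Q^2) (Q^2) k)^2
              * Q ^ (2 * k) * qpoch X (Q^2) k))
    ((1 - var_a * var_q ^ n) * (var_a - var_q ^ n))"
proof -
  obtain m where n: "n = 2*m+1" using assms oddE by blast
  define lam where "lam = (-1)^m * inverse (Q^(m*(m+1)))"
  have lamS: "(-1) ^ ((n - 1) div 2) * Q powi ((1 - int n ^ 2) div 4) = lam"
  proof -
    have e1: "(n - 1) div 2 = m" by (simp add: n)
    have "1 - int n^2 = 4 * (- int (m*(m+1)))" by (simp add: n power2_eq_square algebra_simps)
    hence e2: "(1 - int n ^ 2) div 4 = - int (m*(m+1))" by simp
    show ?thesis unfolding e1 e2 lam_def power_int_minus power_int_of_nat ..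
  qed
  define d where "d k = inverse (qpoch (Q^2) (Q^2) k)^2 * (X^k - lam * (Q^(2*k) * qpoch X (Q^2) k))" for k
  define Phi where "Phi = (\<Sum>k<n. smult (d k) (Pip k))"
  have evalPhi: "poly Phi (a + inverse a) =
     (\<Sum>k<n. qpoch (a*Q) (Q^2) k * qpoch (Q/a) (Q^2) k / (qpoch (Q^2) (Q^2) k)^2 * X^k)
     - lam * (\<Sum>k<n. qpoch (a*Q) (Q^2) k * qpoch (Q/a) (Q^2) k / (qpoch (Q^2) (Q^2) k)^2 * Q^(2*k) * qpoch X (Q^2) k)"
    if "a \<noteq> 0" for a
  proof -
    have "poly Phi (a + inverse a) = (\<Sum>k<n. d k * (qpoch (a*Q) (Q^2) k * qpoch (Q/a) (Q^2) k))"
      unfolding Phi_def poly_sum poly_smult using pi_poly[OF that] by simp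
    also have "\<dots> = (\<Sum>k<n. qpoch (a*Q) (Q^2) k * qpoch (Q/a) (Q^2) k / (qpoch (Q^2) (Q^2) k)^2 * X^k
       - lam * (qpoch (a*Q) (Q^2) k * qpoch (Q/a) (Q^2) k / (qpoch (Q^2) (Q^2) k)^2 * Q^(2*k) * qpoch X (Q^2) k))"
      by (rule sum.cong[OF refl]) (simp only: d_def alg_d)
    finally show ?thesis by (simp only: sum_subtractf sum_distrib_left)
  qed
  define y0 where "y0 = Q^n + inverse (Q^n)"
  have Qn0: "Q^n \<noteq> 0" using Q_nz by simp
  have Py0: "poly Phi y0 = 0" unfolding y0_def evalPhi[OF Qn0] unfolding mainid[OF n] lam_def[symmetric]
    by (simp only: diff_self)
  define H where "H = poly (synthetic_div Phi y0) (A + inverse A)"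
  define z where "z = -(inverse A * inverse (Q^n)) * H"
  have tP: "to_fract ((1 - var_a * var_q ^ n) * (var_a - var_q ^ n)) = (1 - A*Q^n)*(A - Q^n)"
    by (simp add: to_fract_power)
  have FG: "(\<Sum>k<n. qpoch (A * Q) (Q^2) k * qpoch (Q / A) (Q^2) k / (qpoch (Q^2) (Q^2) k)^2 * X ^ k) -
    ((-1) ^ ((n - 1) div 2) * Q powi ((1 - int n ^ 2) div 4) *
     (\<Sum>k<n. qpoch (A * Q) (Q^2) k * qpoch (Q / A) (Q^2) k / (qpoch (Q^2) (Q^2) k)^2
              * Q ^ (2 * k) * qpoch X (Q^2) k))
    = to_fract ((1 - var_a * var_q ^ n) * (var_a - var_q ^ n)) * z"
  proof -
    have "poly Phi (A + inverse A) = (A + inverse A - y0) * H"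
      using synth_eval[of Phi "A + inverse A" y0] Py0 by (simp add: H_def)
    also have "A + inverse A - y0 = -((1 - A*Q^n)*(A - Q^n))*(inverse A * inverse (Q^n))"
      unfolding y0_def by (rule yy) (use A_nz Q_nz in auto)
    finally have "poly Phi (A + inverse A) = ((1 - A*Q^n)*(A - Q^n)) * z" by (simp add: z_def mult.assoc)
    thus ?thesis unfolding lamS evalPhi[OF A_nz, symmetric] tP .
  qed
  define D where "D = D0 n"
  have Dnz: "D \<noteq> 0" by (simp add: D_def D0_nz)
  have invA: "inL D (inverse A)" by (rule inL_inv[OF Dnz]) (unfold D_def D0_def mult.assoc, rule dvd_triv_left)
  have invQ: "inL D (inverse Q)" by (rule inL_inv[OF Dnz]) (unfold D_def D0_def, rule dvd_mult2, rule dvd_mult, rule dvd_refl)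
  have LA: "inL D A" "inL D Q" "inL D X" by (rule inL_fract)+
  have invqf: "inL D (inverse (qpoch (Q^2) (Q^2) k))" if "k < n" for k
  proof -
    have eq: "qpoch (Q^2) (Q^2) k = to_fract (\<Prod>j<k. fq j)"
      unfolding qpoch_def to_fract_prod tfq ..
    have dv: "(\<Prod>j<k. fq j) dvd D" unfolding D_def D0_def
      by (rule dvd_mult, rule prod_dvd_prod_subset) (use that in auto)
    show ?thesis unfolding eq by (rule inL_inv[OF Dnz dv])
  qed
  have Llam: "inL D lam" unfolding lam_def power_inverse[symmetric]
    by (intro inL_mult inL_power inL_uminus inL_1 invQ)
  have Lqx: "inL D (qpoch X (Q^2) k)" for k
    unfolding qpoch_def by (intro inL_prod inL_diff inL_mult inL_power inL_1 LA)
  have Ld: "inL D (d k)" if "k < n" for k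
    unfolding d_def by (intro inL_mult inL_diff inL_power invqf[OF that] LA Llam Lqx)
  have LPip: "Lpoly D (Pip k)" for k
    unfolding Pip_def by (intro Lpoly_prod Lpoly_pCons inL_add inL_mult inL_power inL_uminus inL_1 LA Lpoly_0)
  have LPhi: "Lpoly D Phi" unfolding Phi_def
    by (intro Lpoly_sum Lpoly_smult Ld LPip) auto
  have Ly0: "inL D y0" unfolding y0_def power_inverse[symmetric] by (intro inL_add inL_power LA invQ)
  have Lz: "inL D z" unfolding z_def H_def power_inverse[symmetric]
    by (intro inL_mult inL_uminus inL_power invA invQ inL_poly Lpoly_synth LPhi Ly0 inL_add LA)
  then obtain r k where rk: "z * to_fract D ^ k = to_fract r" unfolding inL_def by blast
  have "z = to_fract r / to_fract (D ^ k)"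
    using rk Dnz by (simp add: to_fract_power eq_divide_eq)
  moreover have "coprime (D ^ k) ((1 - var_a * var_q ^ n) * (var_a - var_q ^ n))"
  proof -
    have c0: "coprime (D0 n) ((1 - var_a * var_q ^ n) * (var_a - var_q ^ n))" by (rule cop) (simp add: n)
    show ?thesis unfolding D_def by (rule coprime_power_left_iff[THEN iffD2], rule disjI1, rule c0)
  qed
  moreover have "D ^ k \<noteq> 0" using Dnz by simp
  ultimately show ?thesis unfolding rcong_def FG
    by (intro exI[of _ r] exI[of _ "D^k"]) simp
qed


end
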